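(* Let $p \geq 4$ and let $L$ be the Laplacian of the graph $C_\infty \oplus K_p \oplus C_\infty$. Then there exists a linear subspace $E_K \subset l^2$ of dimension $p-3$ such that every $v \in E_K$ satisfies $Lv = pv$ and $v_j = 0$ for all $j \notin \{-p+2,\ldots,-1\}$.
   Context: For an integer $p \geq 3$, the graph $C_\infty \oplus K_p \oplus C_\infty$ has vertex set $\mathbb{Z}$; its edges are every pair of distinct vertices in $\{-p+1,\ldots,0\}$, the edges $\{j,j+1\}$ for all $j \leq -p$, and the edges $\{j,j+1\}$ for all $j \geq 0$. $l^2$ is the real Hilbert space of square-summable real sequences indexed by $\mathbb{Z}$. The Laplacian acts by $(Lv)_i = \deg(i)\, v_i - \sum_{j \sim i} v_j$. *)

theory Defs
  imports "HOL-Analysis.Analysis" "HOL-Library.Function_Algebras"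
begin

definition sscale :: "real \<Rightarrow> (int \<Rightarrow> real) \<Rightarrow> (int \<Rightarrow> real)" where
  "sscale c v = (\<lambda>i. c * v i)"

lemma vector_space_sscale: "vector_space sscale"
  by unfold_locales (auto simp: sscale_def fun_eq_iff algebra_simps)

definition l2 :: "(int \<Rightarrow> real) set" where
  "l2 = {v. (\<lambda>i. (v i)\<^sup>2) summable_on UNIV}"

text \<open>Adjacency of the graph C_inf + K_p + C_inf on vertex set Z.\<close>

definition adj :: "nat \<Rightarrow> int \<Rightarrow> int \<Rightarrow> bool" where
  "adj p i j \<longleftrightarrow> i \<noteq> j \<and>
     ((i \<in> {-int p + 1..0} \<and> j \<in> {-int p + 1..0})
      \<or> (\<bar>i - j\<bar> = 1 \<and> (min i j \<le> - int p \<or> min i j \<ge> 0)))"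

definition nbrs :: "nat \<Rightarrow> int \<Rightarrow> int set" where
  "nbrs p i = {j. adj p i j}"

definition deg :: "nat \<Rightarrow> int \<Rightarrow> nat" where
  "deg p i = card (nbrs p i)"

definition lap :: "nat \<Rightarrow> (int \<Rightarrow> real) \<Rightarrow> (int \<Rightarrow> real)" where
  "lap p v = (\<lambda>i. real (deg p i) * v i - (\<Sum>j\<in>nbrs p i. v j))"

end

theory Submission
  imports Defs
begin

lemma sum_fun_apply: "(\<Sum>x\<in>A. f x) (i::int) = (\<Sum>x\<in>A. (f x i :: real))"
  by (induction A rule: infinite_finite_induct) auto

definition ebas :: "int \<Rightarrow> int \<Rightarrow> real" where
  "ebas k = (\<lambda>i. if i = k then 1 else if i = -1 then -1 else 0)"

lemma nbrs_S:
  assumes "i \<in> {-int p + 2..-1}"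
  shows "nbrs p i = {-int p + 1..0} - {i}"
  using assms unfolding nbrs_def adj_def by auto

lemma nbrs_fin: "nbrs p i \<subseteq> {i-1..i+1} \<union> {-int p + 1..0}"
  unfolding nbrs_def adj_def by auto

lemma nbrs_out:
  assumes "i \<notin> {-int p + 2..-1}"
  shows "nbrs p i \<inter> {-int p + 2..-1} = (if i \<in> {-int p + 1..0} then {-int p + 2..-1} else {})"
  using assms unfolding nbrs_def adj_def by auto

theorem proposition10:
  fixes p :: nat
  assumes "p \<ge> 4"
  shows "\<exists>E. E \<subseteq> l2 \<and> module.subspace sscale E \<and> vector_space.dim sscale E = p - 3 \<and>
           (\<forall>v\<in>E. lap p v = sscale (real p) v \<and>
                   (\<forall>j. j \<notin> {-int p + 2..-1} \<longrightarrow> v j = 0))"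
proof -
  interpret vs: vector_space sscale by (rule vector_space_sscale)
  define S where "S = {-int p + 2..-1}"
  define E where "E = {v :: int \<Rightarrow> real. (\<forall>j. j \<notin> S \<longrightarrow> v j = 0) \<and> (\<Sum>j\<in>S. v j) = 0}"
  define B where "B = ebas ` {-int p + 2..-2}"
  have finS: "finite S" by (simp add: S_def)
  have El2: "E \<subseteq> l2"
  proof
    fix v assume "v \<in> E"
    then have z: "\<And>j. j \<notin> S \<Longrightarrow> v j = 0" by (auto simp: E_def)
    have "(\<lambda>i. (v i)\<^sup>2) summable_on S" using finS by simp
    then show "v \<in> l2" unfolding l2_def
      using summable_on_cong_neutral[of UNIV S "\<lambda>i. (v i)\<^sup>2" "\<lambda>i. (v i)\<^sup>2"] z by auto
  qed
  have sub: "vs.subspace E"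
    unfolding vs.subspace_def E_def
    by (auto simp: sscale_def sum.distrib sum_distrib_left[symmetric])
  have BE: "B \<subseteq> E"
    unfolding B_def E_def S_def ebas_def
  proof safe
    fix k assume k: "k \<in> {-int p + 2..-2}"
    have "(\<Sum>j\<in>{-int p + 2..-1}. if j = k then 1 else if j = -1 then -1 else (0::real))
        = (\<Sum>j\<in>{k, -1}. if j = k then 1 else if j = -1 then -1 else (0::real))"
      by (rule sum.mono_neutral_right) (use k in auto)
    also have "\<dots> = 0" using k by simp
    finally show "(\<Sum>j\<in>{-int p + 2..-1}. if j = k then 1 else if j = -1 then -1 else (0::real)) = 0" .
  qed (auto)
  have inj: "inj_on ebas {-int p + 2..-2}"
  proof (rule inj_onI)
    fix x y assume "x \<in> {-int p + 2..-2}" "y \<in> {-int p + 2..-2}" "ebas x = ebas y"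
    then have "ebas x x = ebas y x" by simp
    then show "x = y" using \<open>x \<in> _\<close> by (auto simp: ebas_def split: if_splits)
  qed
  have cardB: "card B = p - 3"
    unfolding B_def using card_image[OF inj] assms by simp
  have ind: "vs.independent B"
  proof
    assume "vs.dependent B"
    then obtain t u where t: "finite t" "t \<subseteq> B" "(\<Sum>v\<in>t. sscale (u v) v) = 0" and
      w: "\<exists>v\<in>t. u v \<noteq> 0" unfolding vs.dependent_explicit by blast
    obtain w where w: "w \<in> t" "u w \<noteq> 0" using w by blast
    then obtain k where k: "k \<in> {-int p + 2..-2}" "w = ebas k" using t B_def by auto
    have "0 = (\<Sum>v\<in>t. sscale (u v) v) k" using t by simp
    also have "\<dots> = (\<Sum>v\<in>t. u v * v k)" by (simp add: sum_fun_apply sscale_def)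
    also have "\<dots> = (\<Sum>v\<in>{w}. u v * v k)"
    proof (rule sum.mono_neutral_right)
      show "\<forall>v\<in>t - {w}. u v * v k = 0"
      proof
        fix v assume v: "v \<in> t - {w}"
        then obtain k' where k': "k' \<in> {-int p + 2..-2}" "v = ebas k'" using t B_def by auto
        then have "k' \<noteq> k" using v k by auto
        then show "u v * v k = 0" using k k' by (auto simp: ebas_def)
      qed
    qed (use t w in auto)
    also have "\<dots> = u w" using k by (simp add: ebas_def)
    finally show False using w by simp
  qed
  have span: "E \<subseteq> vs.span B"
  proof
    fix v assume v: "v \<in> E"
    have eq: "v = (\<Sum>k\<in>{-int p + 2..-2}. sscale (v k) (ebas k))"
    proof
      fix i
      have rhs: "(\<Sum>k\<in>{-int p + 2..-2}. sscale (v k) (ebas k)) i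
           = (\<Sum>k\<in>{-int p + 2..-2}. v k * ebas k i)"
        by (simp add: sum_fun_apply sscale_def)
      show "v i = (\<Sum>k\<in>{-int p + 2..-2}. sscale (v k) (ebas k)) i"
      proof (cases "i \<in> {-int p + 2..-2}")
        case True
        have "(\<Sum>k\<in>{-int p + 2..-2}. v k * ebas k i) = (\<Sum>k\<in>{i}. v k * ebas k i)"
          by (rule sum.mono_neutral_right) (use True in \<open>auto simp: ebas_def\<close>)
        then show ?thesis using rhs True by (simp add: ebas_def)
      next
        case False
        show ?thesis
        proof (cases "i = -1")
          case True
          have "S = insert (-1) {-int p + 2..-2}" unfolding S_def using assms by auto
          then have "(\<Sum>j\<in>S. v j) = v (-1) + (\<Sum>k\<in>{-int p + 2..-2}. v k)" by simp
          then have "v (-1) = - (\<Sum>k\<in>{-int p + 2..-2}. v k)" using v by (simp add: E_def)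
          moreover have "(\<Sum>k\<in>{-int p + 2..-2}. v k * ebas k i) = (\<Sum>k\<in>{-int p + 2..-2}. - v k)"
            by (rule sum.cong) (auto simp: ebas_def True)
          ultimately show ?thesis using rhs True by (simp add: sum_negf)
        next
          case F2: False
          have "i \<notin> S" using False F2 by (auto simp: S_def)
          then have "v i = 0" using v by (simp add: E_def)
          moreover have "(\<Sum>k\<in>{-int p + 2..-2}. v k * ebas k i) = 0"
            by (rule sum.neutral) (use False F2 in \<open>auto simp: ebas_def\<close>)
          ultimately show ?thesis using rhs by simp
        qed
      qed
    qed
    have "(\<Sum>k\<in>{-int p + 2..-2}. sscale (v k) (ebas k)) \<in> vs.span B"
      by (rule vs.span_sum, rule vs.span_scale, rule vs.span_base) (auto simp: B_def)
    then show "v \<in> vs.span B" using eq by simp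
  qed
  have dim: "vs.dim E = p - 3"
    using vs.basis_card_eq_dim[OF BE span ind] cardB by simp
  have lapE: "\<forall>v\<in>E. lap p v = sscale (real p) v \<and> (\<forall>j. j \<notin> S \<longrightarrow> v j = 0)"
  proof
    fix v assume v: "v \<in> E"
    then have z: "\<And>j. j \<notin> S \<Longrightarrow> v j = 0" and s0: "(\<Sum>j\<in>S. v j) = 0" by (auto simp: E_def)
    have li: "lap p v i = real p * v i" for i
    proof -
      have fn: "finite (nbrs p i)" using nbrs_fin[of p i] finite_subset by blast
      have red: "(\<Sum>j\<in>nbrs p i. v j) = (\<Sum>j\<in>nbrs p i \<inter> S. v j)"
      proof (rule sum.mono_neutral_right)
        show "\<forall>j\<in>nbrs p i - nbrs p i \<inter> S. v j = 0" using z by blast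
      qed (use fn in blast)+
      show ?thesis
      proof (cases "i \<in> S")
        case True
        have nb: "nbrs p i = {-int p + 1..0} - {i}" using True nbrs_S S_def by blast
        have iK: "i \<in> {-int p + 1..0}" using True by (simp add: S_def)
        have "card (nbrs p i) = card {-int p + 1..0} - 1" unfolding nb
          by (rule card_Diff_singleton) (rule iK)
        also have "card {-int p + 1..0} = p" by simp
        finally have "card (nbrs p i) = p - 1" .
        then have dg: "real (deg p i) = real p - 1" using assms by (simp add: deg_def)
        have SK: "S \<subseteq> {-int p + 1..0}" unfolding S_def by auto
        have "nbrs p i \<inter> S = S - {i}" unfolding nb using SK by blast
        then have "(\<Sum>j\<in>nbrs p i. v j) = (\<Sum>j\<in>S. v j) - v i"
          using red True finS by (simp add: sum_diff1)
        then have "lap p v i = (real p - 1) * v i - (0 - v i)"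
          using dg s0 by (simp add: lap_def)
        then show ?thesis by (simp add: left_diff_distrib)
      next
        case False
        have "nbrs p i \<inter> S = (if i \<in> {-int p + 1..0} then S else {})"
        proof -
          have "i \<notin> {-int p + 2..-1}" using False unfolding S_def .
          from nbrs_out[OF this] show ?thesis unfolding S_def .
        qed
        then have "(\<Sum>j\<in>nbrs p i \<inter> S. v j) = 0" using s0 by simp
        then have "(\<Sum>j\<in>nbrs p i. v j) = 0" using red by simp
        then show ?thesis using z[OF False] by (simp add: lap_def)
      qed
    qed
    have "lap p v = sscale (real p) v" by (rule ext) (simp add: li sscale_def)
    then show "lap p v = sscale (real p) v \<and> (\<forall>j. j \<notin> S \<longrightarrow> v j = 0)"
      using z by blast
  qed
  show ?thesis
    by (rule exI[of _ E]) (use El2 sub dim lapE S_def in auto)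
qed

end
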